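(* Let $D$ be a normalized 2-page book drawing of $K_n$ and $1\le i<j\le n$. Let $k$ be the number of entries of $M(D)$ to the right of $(i,j)$ having the same color as $(i,j)$ plus the number of entries above $(i,j)$ having the same color as $(i,j)$. Then exactly $k$ of the vertices other than $i,j$ lie on one side of the edge $ij$ (i.e., $ij$ is a $k$-edge, where possibly $k>\lfloor n/2\rfloor-1$).
   Context: Normalized 2-page book drawing of $K_n$: vertices $(1,0),\dots,(n,0)$ labelled $1,\dots,n$ left to right; edges $i(i+1)$ on the $x$-axis (spine); edge $1n$ in the upper half-plane; every other edge $ij$ a semicircle over $[i,j]$ in the upper or lower half-plane. Edges on the spine or in the upper half-plane are blue, in the lower half-plane red. $M(D)$ has entries $(i,j)$, $1\le i<j\le n$ (row $i$, column $j$), colored as edge $ij$; entries $(i',j)$ with $i'<i$ are above $(i,j)$, entries $(i,j')$ with $j'>j$ are to its right. For distinct vertices $p,q,r$, $r$ is on the left (right) of $\overrightarrow{pq}$ if the triangle with edges $pq,qr,rp$ traced in order $p,q,r$ is counterclockwise (clockwise); $pq$ is a $k$-edge if exactly $k$ of the other vertices lie on one side. *)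

theory Defs
  imports "HOL-Complex_Analysis.Winding_Numbers"
begin

text \<open>A normalized 2-page book drawing of K_n is encoded by n and a function
  up :: nat => nat => bool; for i < j with j > i+1, up i j says that the
  semicircle over [i,j] lies in the upper half-plane (else the lower one). Vertex v is the point (v,0),
  i.e. the complex number of_nat v.\<close>

definition normalized_book_drawing :: "nat \<Rightarrow> (nat \<Rightarrow> nat \<Rightarrow> bool) \<Rightarrow> bool" where
  "normalized_book_drawing n up \<longleftrightarrow> (n \<ge> 3 \<longrightarrow> up 1 n)"

definition semicircle :: "bool \<Rightarrow> nat \<Rightarrow> nat \<Rightarrow> real \<Rightarrow> complex" where
  "semicircle upper i j t =
     (of_nat i + of_nat j) / 2 - ((of_nat j - of_nat i) / 2) *
       exp (if upper then - (\<i> * of_real (pi * t)) else \<i> * of_real (pi * t))"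

definition edge_arc :: "(nat \<Rightarrow> nat \<Rightarrow> bool) \<Rightarrow> nat \<Rightarrow> nat \<Rightarrow> real \<Rightarrow> complex" where
  "edge_arc up i j =
     (if j = Suc i then linepath (of_nat i) (of_nat j) else semicircle (up i j) i j)"

definition blue :: "(nat \<Rightarrow> nat \<Rightarrow> bool) \<Rightarrow> nat \<Rightarrow> nat \<Rightarrow> bool" where
  "blue up i j \<longleftrightarrow> j = Suc i \<or> up i j"

definition edge_path :: "(nat \<Rightarrow> nat \<Rightarrow> bool) \<Rightarrow> nat \<Rightarrow> nat \<Rightarrow> real \<Rightarrow> complex" where
  "edge_path up p q = (if p < q then edge_arc up p q else reversepath (edge_arc up q p))"

definition triangle_path :: "(nat \<Rightarrow> nat \<Rightarrow> bool) \<Rightarrow> nat \<Rightarrow> nat \<Rightarrow> nat \<Rightarrow> real \<Rightarrow> complex" where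
  "triangle_path up p q r = edge_path up p q +++ edge_path up q r +++ edge_path up r p"

definition counterclockwise :: "(real \<Rightarrow> complex) \<Rightarrow> bool" where
  "counterclockwise \<gamma> \<longleftrightarrow> (\<exists>z. z \<notin> path_image \<gamma> \<and> winding_number \<gamma> z = 1)"

definition clockwise :: "(real \<Rightarrow> complex) \<Rightarrow> bool" where
  "clockwise \<gamma> \<longleftrightarrow> (\<exists>z. z \<notin> path_image \<gamma> \<and> winding_number \<gamma> z = -1)"

definition left_of :: "(nat \<Rightarrow> nat \<Rightarrow> bool) \<Rightarrow> nat \<Rightarrow> nat \<Rightarrow> nat \<Rightarrow> bool" where
  "left_of up p q r \<longleftrightarrow> counterclockwise (triangle_path up p q r)"

definition right_of :: "(nat \<Rightarrow> nat \<Rightarrow> bool) \<Rightarrow> nat \<Rightarrow> nat \<Rightarrow> nat \<Rightarrow> bool" where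
  "right_of up p q r \<longleftrightarrow> clockwise (triangle_path up p q r)"

definition is_k_edge :: "nat \<Rightarrow> (nat \<Rightarrow> nat \<Rightarrow> bool) \<Rightarrow> nat \<Rightarrow> nat \<Rightarrow> nat \<Rightarrow> bool" where
  "is_k_edge n up p q k \<longleftrightarrow>
     card {r \<in> {1..n} - {p, q}. left_of up p q r} = k \<or>
     card {r \<in> {1..n} - {p, q}. right_of up p q r} = k"

end

theory Submission
  imports Defs
begin


lemma exp_half: "exp (2 * complex_of_real pi * \<i> * (1 / 2 - complex_of_real t)) = - exp (- (\<i> * (complex_of_real pi * (2 * complex_of_real t))))"
proof -
  have "2 * complex_of_real pi * \<i> * (1 / 2 - complex_of_real t) = of_real pi * \<i> + (- (\<i> * (complex_of_real pi * (2 * complex_of_real t))))"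
    by (simp add: algebra_simps)
  then show ?thesis by (simp only: exp_add) (simp add: exp_pi_i')
qed

lemma exp_half2: "exp (2 * complex_of_real pi * \<i> * (3 / 2 - complex_of_real t)) = - exp (\<i> * (complex_of_real pi * (2 - 2 * complex_of_real t)))"
proof -
  have "2 * complex_of_real pi * \<i> * (3 / 2 - complex_of_real t) = of_real pi * \<i> + (\<i> * (complex_of_real pi * (2 - 2 * complex_of_real t)))"
    by (simp add: algebra_simps)
  then show ?thesis by (simp only: exp_add) (simp add: exp_pi_i')
qed

lemma sc_join:
  assumes "a < b"
  shows "semicircle True a b +++ reversepath (semicircle False a b) =
         shiftpath (1/2) (reversepath (circlepath ((of_nat a + of_nat b)/2) ((real b - real a)/2)))"
proof
  fix t :: real
  show "(semicircle True a b +++ reversepath (semicircle False a b)) t =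
         shiftpath (1/2) (reversepath (circlepath ((of_nat a + of_nat b)/2) ((real b - real a)/2))) t"
  proof (cases "t \<le> 1/2")
    case True
    show ?thesis using True
      by (simp add: joinpaths_def shiftpath_def reversepath_def semicircle_def circlepath exp_half)
  next
    case False
    show ?thesis using False
      by (simp add: joinpaths_def shiftpath_def reversepath_def semicircle_def circlepath exp_half2)
  qed
qed



definition qf :: "nat \<Rightarrow> nat \<Rightarrow> complex \<Rightarrow> real" where
  "qf a b z = (Re z - real a) * (Re z - real b) + (Im z)^2"

lemma qf_cmod: "qf a b z = (cmod (z - (of_nat a + of_nat b)/2))^2 - ((real b - real a)/2)^2"
  unfolding qf_def cmod_power2 by (simp add: power2_eq_square field_simps)

lemma path_semicircle: "path (semicircle u a b)"
  unfolding path_def semicircle_def by (cases u) (auto intro!: continuous_intros)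

lemma pathstart_semicircle [simp]: "pathstart (semicircle u a b) = of_nat a"
  by (simp add: pathstart_def semicircle_def field_simps)

lemma pathfinish_semicircle [simp]: "pathfinish (semicircle u a b) = of_nat b"
  by (auto simp add: pathfinish_def semicircle_def field_simps exp_pi_i' exp_minus)

lemma semicircle_on_circle: "qf a b (semicircle u a b t) = 0"
proof -
  have "cmod (semicircle u a b t - (of_nat a + of_nat b)/2) = \<bar>real b - real a\<bar> / 2"
  proof -
    have "complex_of_nat b - complex_of_nat a = of_real (real b - real a)" by simp
    then show ?thesis by (simp add: semicircle_def norm_mult norm_divide del: of_real_diff)
  qed
  then have "(cmod (semicircle u a b t - (of_nat a + of_nat b)/2))^2 = (\<bar>real b - real a\<bar> / 2)^2" by simp
  also have "\<dots> = ((real b - real a)/2)^2" by (simp add: power_divide)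
  finally show ?thesis by (simp add: qf_cmod)
qed

lemma semicircle_Im:
  assumes "t \<in> {0..1}" "a \<le> b"
  shows "if u then Im (semicircle u a b t) \<ge> 0 else Im (semicircle u a b t) \<le> 0"
proof -
  have s: "sin (pi * t) \<ge> 0" using assms by (intro sin_ge_zero) auto
  have "real a \<le> real b" using assms by simp
  then show ?thesis using s
    by (auto simp add: semicircle_def Im_exp Re_exp mult_nonneg_nonneg)
qed

lemma path_image_semicircle:
  assumes "a \<le> b"
  shows "path_image (semicircle u a b) \<subseteq> {w. qf a b w = 0 \<and> (if u then Im w \<ge> 0 else Im w \<le> 0)}"
  using semicircle_on_circle semicircle_Im[OF _ assms] unfolding path_image_def by auto



lemma seg_Im0: "w \<in> closed_segment (of_nat a :: complex) (of_nat b) \<Longrightarrow> Im w = 0"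
  by (auto simp: closed_segment_def)

lemma wn_semis:
  assumes ab: "a < b" and z: "Im z \<noteq> 0" "qf a b z \<noteq> 0"
  shows "winding_number (semicircle True a b) z = winding_number (linepath (of_nat a) (of_nat b)) z + (if Im z > 0 \<and> qf a b z < 0 then -1 else 0)"
    and "winding_number (semicircle False a b) z = winding_number (linepath (of_nat a) (of_nat b)) z + (if Im z < 0 \<and> qf a b z < 0 then 1 else 0)"
proof -
  define c :: complex where "c = (of_nat a + of_nat b)/2"
  define R where "R = (real b - real a)/2"
  have R: "R > 0" using ab by (simp add: R_def)
  define U where "U = semicircle True a b"
  define L where "L = semicircle False a b"
  define l where "l = linepath (of_nat a :: complex) (of_nat b)"
  have qcm: "qf a b w = (cmod (w - c))^2 - R^2" for w by (simp add: qf_cmod c_def R_def)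
  have incb: "w \<in> cball c R \<longleftrightarrow> qf a b w \<le> 0" for w
  proof -
    have "w \<in> cball c R \<longleftrightarrow> cmod (w - c) \<le> R" by (simp add: dist_norm norm_minus_commute)
    also have "\<dots> \<longleftrightarrow> (cmod (w - c))^2 \<le> R^2" using R by (simp add: power_mono_iff abs_le_square_iff)
    finally show ?thesis by (simp add: qcm)
  qed
  have pU: "path U" and pL: "path L" and pl: "path l" by (simp_all add: U_def L_def l_def path_semicircle)
  have iU: "path_image U \<subseteq> {w. qf a b w = 0 \<and> Im w \<ge> 0}"
    using path_image_semicircle[of a b True] ab by (simp add: U_def)
  have iL: "path_image L \<subseteq> {w. qf a b w = 0 \<and> Im w \<le> 0}"
    using path_image_semicircle[of a b False] ab by (simp add: L_def)
  have il: "path_image l = closed_segment (of_nat a) (of_nat b)" by (simp add: l_def)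
  have zU: "z \<notin> path_image U" using iU z by auto
  have zL: "z \<notin> path_image L" using iL z by auto
  have zl: "z \<notin> path_image l" using il z seg_Im0 by blast
  have qa: "qf a b (of_nat a) = 0" and qb: "qf a b (of_nat b) = 0" by (simp_all add: qf_def)
  define KU where "KU = {w. qf a b w \<le> 0 \<and> Im w \<ge> 0}"
  define KL where "KL = {w. qf a b w \<le> 0 \<and> Im w \<le> 0}"
  have "KU = cball c R \<inter> {w. Im w \<ge> 0}" unfolding KU_def using incb by blast
  then have cKU: "convex KU" by (simp add: convex_Int convex_halfspace_Im_ge)
  have "KL = cball c R \<inter> {w. Im w \<le> 0}" unfolding KL_def using incb by blast
  then have cKL: "convex KL" by (simp add: convex_Int convex_halfspace_Im_le)
  have segU: "closed_segment (of_nat b) (of_nat a) \<subseteq> KU"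
    by (rule closed_segment_subset[OF _ _ cKU]) (auto simp: KU_def qa qb)
  have segL: "closed_segment (of_nat b) (of_nat a) \<subseteq> KL"
    by (rule closed_segment_subset[OF _ _ cKL]) (auto simp: KL_def qa qb)
  have lensU: "winding_number (U +++ reversepath l) z = winding_number U z - winding_number l z"
  proof -
    have "winding_number (U +++ reversepath l) z = winding_number U z + winding_number (reversepath l) z"
      by (rule winding_number_join) (use pU pl zU zl in \<open>auto simp: U_def l_def closed_segment_commute\<close>)
    also have "winding_number (reversepath l) z = - winding_number l z"
      by (rule winding_number_reversepath) (use pl zl in auto)
    finally show ?thesis by simp
  qed
  have lensL: "winding_number (L +++ reversepath l) z = winding_number L z - winding_number l z"
  proof -
    have "winding_number (L +++ reversepath l) z = winding_number L z + winding_number (reversepath l) z"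
      by (rule winding_number_join) (use pL pl zL zl in \<open>auto simp: L_def l_def closed_segment_commute\<close>)
    also have "winding_number (reversepath l) z = - winding_number l z"
      by (rule winding_number_reversepath) (use pl zl in auto)
    finally show ?thesis by simp
  qed
  have U0: "winding_number (U +++ reversepath l) z = 0" if "z \<notin> KU"
  proof (rule winding_number_zero_outside[OF _ cKU _ that])
    show "path (U +++ reversepath l)" using pU pl by (simp add: U_def l_def)
    show "pathfinish (U +++ reversepath l) = pathstart (U +++ reversepath l)" by (simp add: U_def l_def)
    show "path_image (U +++ reversepath l) \<subseteq> KU"
      using iU segU by (subst path_image_join) (auto simp: U_def l_def KU_def)
  qed
  have L0: "winding_number (L +++ reversepath l) z = 0" if "z \<notin> KL"
  proof (rule winding_number_zero_outside[OF _ cKL _ that])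
    show "path (L +++ reversepath l)" using pL pl by (simp add: L_def l_def)
    show "pathfinish (L +++ reversepath l) = pathstart (L +++ reversepath l)" by (simp add: L_def l_def)
    show "path_image (L +++ reversepath l) \<subseteq> KL"
      using iL segL by (subst path_image_join) (auto simp: L_def l_def KL_def)
  qed
  have circ: "winding_number U z - winding_number L z = -1" if "qf a b z < 0"
  proof -
    have zin: "cmod (z - c) < R"
    proof -
      have "(cmod (z - c))^2 < R^2" using that qcm[of z] by simp
      then show ?thesis using R by (simp add: power_less_imp_less_base)
    qed
    have "winding_number (U +++ reversepath L) z = winding_number U z + winding_number (reversepath L) z"
      by (rule winding_number_join) (use pU pL zU zL in \<open>auto simp: U_def L_def\<close>)
    also have "winding_number (reversepath L) z = - winding_number L z"
      by (rule winding_number_reversepath) (use pL zL in auto)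
    finally have "winding_number (U +++ reversepath L) z = winding_number U z - winding_number L z" by simp
    moreover have "U +++ reversepath L = shiftpath (1/2) (reversepath (circlepath c R))"
      unfolding U_def L_def c_def R_def by (rule sc_join[OF ab])
    moreover have zc: "z \<notin> path_image (circlepath c R)" using zin R by (auto simp: dist_norm norm_minus_commute)
    moreover have "winding_number (shiftpath (1/2) (reversepath (circlepath c R))) z = -1"
    proof -
      have "winding_number (shiftpath (1/2) (reversepath (circlepath c R))) z = winding_number (reversepath (circlepath c R)) z"
        by (rule winding_number_shiftpath) (use zc in auto)
      also have "\<dots> = - winding_number (circlepath c R) z"
        by (rule winding_number_reversepath) (use zc in auto)
      also have "\<dots> = -1" using winding_number_circlepath[of z c R] zin by (simp add: norm_minus_commute)
      finally show ?thesis .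
    qed
    ultimately show ?thesis by simp
  qed
  have memU: "z \<in> KU \<longleftrightarrow> Im z > 0 \<and> qf a b z < 0" using z by (auto simp: KU_def)
  have memL: "z \<in> KL \<longleftrightarrow> Im z < 0 \<and> qf a b z < 0" using z by (auto simp: KL_def)
  have fU: "winding_number U z = winding_number l z + (if Im z > 0 \<and> qf a b z < 0 then -1 else 0)"
  proof (cases "z \<in> KU")
    case True
    then have "z \<notin> KL" using z memU memL by auto
    then have "winding_number L z = winding_number l z" using lensL L0 by simp
    moreover have "winding_number U z - winding_number L z = -1" using circ True memU by simp
    moreover have "winding_number U z = (winding_number U z - winding_number L z) + winding_number L z" by simp
    ultimately have "winding_number U z = winding_number l z - 1" by simp
    then show ?thesis using True memU by simp
  next
    case False
    then show ?thesis using lensU U0 memU by simp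
  qed
  have fL: "winding_number L z = winding_number l z + (if Im z < 0 \<and> qf a b z < 0 then 1 else 0)"
  proof (cases "z \<in> KL")
    case True
    then have "z \<notin> KU" using z memU memL by auto
    then have "winding_number U z = winding_number l z" using lensU U0 by simp
    moreover have "winding_number U z - winding_number L z = -1" using circ True memL by simp
    moreover have "winding_number L z = winding_number U z - (winding_number U z - winding_number L z)" by simp
    ultimately have "winding_number L z = winding_number l z + 1" by simp
    then show ?thesis using True memL by simp
  next
    case False
    then show ?thesis using lensL L0 memL by simp
  qed
  show "winding_number (semicircle True a b) z = winding_number (linepath (of_nat a) (of_nat b)) z + (if Im z > 0 \<and> qf a b z < 0 then -1 else 0)"
    using fU by (simp add: U_def l_def)
  show "winding_number (semicircle False a b) z = winding_number (linepath (of_nat a) (of_nat b)) z + (if Im z < 0 \<and> qf a b z < 0 then 1 else 0)"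
    using fL by (simp add: L_def l_def)
qed



lemma qf_sym: "qf a b z = qf b a z"
  by (simp add: qf_def algebra_simps)

definition sig :: "(nat \<Rightarrow> nat \<Rightarrow> bool) \<Rightarrow> nat \<Rightarrow> nat \<Rightarrow> complex \<Rightarrow> int" where
  "sig up a b z = (if b = Suc a then 0 else if up a b then (if Im z > 0 \<and> qf a b z < 0 then -1 else 0)
                   else (if Im z < 0 \<and> qf a b z < 0 then 1 else 0))"

definition sg :: "(nat \<Rightarrow> nat \<Rightarrow> bool) \<Rightarrow> nat \<Rightarrow> nat \<Rightarrow> complex \<Rightarrow> int" where
  "sg up p q z = (if p < q then sig up p q z else - sig up q p z)"

lemma edge_arc_props:
  assumes "a < b"
  shows "path (edge_arc up a b)" "pathstart (edge_arc up a b) = of_nat a" "pathfinish (edge_arc up a b) = of_nat b"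
    "path_image (edge_arc up a b) \<subseteq> {w. Im w = 0 \<or> qf a b w = 0}"
  using path_image_semicircle[of a b "up a b"] assms seg_Im0[of _ a b]
  by (auto simp: edge_arc_def path_semicircle)

lemma edge_path_props:
  assumes "p \<noteq> q"
  shows "path (edge_path up p q)" "pathstart (edge_path up p q) = of_nat p" "pathfinish (edge_path up p q) = of_nat q"
    "path_image (edge_path up p q) \<subseteq> {w. Im w = 0 \<or> qf p q w = 0}"
proof -
  have "path (edge_path up p q) \<and> pathstart (edge_path up p q) = of_nat p \<and> pathfinish (edge_path up p q) = of_nat q
    \<and> path_image (edge_path up p q) \<subseteq> {w. Im w = 0 \<or> qf p q w = 0}"
  proof (cases "p < q")
    case True
    then show ?thesis using edge_arc_props[OF True, of up] by (simp add: edge_path_def)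
  next
    case False
    then have qp: "q < p" using assms by simp
    have "{w. Im w = 0 \<or> qf q p w = 0} = {w. Im w = 0 \<or> qf p q w = 0}" using qf_sym by auto
    then show ?thesis using edge_arc_props[OF qp, of up] False by (simp add: edge_path_def)
  qed
  then show "path (edge_path up p q)" "pathstart (edge_path up p q) = of_nat p" "pathfinish (edge_path up p q) = of_nat q"
    "path_image (edge_path up p q) \<subseteq> {w. Im w = 0 \<or> qf p q w = 0}" by auto
qed

lemma wn_edge_arc:
  assumes ab: "a < b" and z: "Im z \<noteq> 0" "qf a b z \<noteq> 0"
  shows "winding_number (edge_arc up a b) z = winding_number (linepath (of_nat a) (of_nat b)) z + of_int (sig up a b z)"
  using wn_semis[OF ab z] by (auto simp: edge_arc_def sig_def)

lemma wn_edge_path: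
  assumes pq: "p \<noteq> q" and z: "Im z \<noteq> 0" "qf p q z \<noteq> 0"
  shows "winding_number (edge_path up p q) z = winding_number (linepath (of_nat p) (of_nat q)) z + of_int (sg up p q z)"
proof (cases "p < q")
  case True
  then show ?thesis using wn_edge_arc[OF True z] by (simp add: edge_path_def sg_def)
next
  case False
  then have qp: "q < p" using pq by simp
  have z': "Im z \<noteq> 0" "qf q p z \<noteq> 0" using z qf_sym by auto
  have zl: "z \<notin> path_image (linepath (of_nat q :: complex) (of_nat p))" using z seg_Im0 by auto
  have ze: "z \<notin> path_image (edge_arc up q p)" using edge_arc_props(4)[OF qp, of up] z' by auto
  have "winding_number (edge_path up p q) z = - winding_number (edge_arc up q p) z"
    using False by (simp add: edge_path_def winding_number_reversepath edge_arc_props(1)[OF qp] ze)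
  also have "\<dots> = - winding_number (linepath (of_nat q) (of_nat p)) z - of_int (sig up q p z)"
    using wn_edge_arc[OF qp z'] by simp
  also have "- winding_number (linepath (of_nat q) (of_nat p)) z = winding_number (linepath (of_nat p) (of_nat q)) z"
    using winding_number_reversepath[of "linepath (of_nat p :: complex) (of_nat q)" z] zl
    by (simp add: closed_segment_commute)
  finally show ?thesis using False by (simp add: sg_def)
qed

definition good :: "nat \<Rightarrow> nat \<Rightarrow> nat \<Rightarrow> complex \<Rightarrow> bool" where
  "good p q r z \<longleftrightarrow> Im z \<noteq> 0 \<and> qf p q z \<noteq> 0 \<and> qf q r z \<noteq> 0 \<and> qf r p z \<noteq> 0"

lemma tri_props:
  assumes "p \<noteq> q" "q \<noteq> r" "r \<noteq> p"
  shows "path (triangle_path up p q r)" "pathfinish (triangle_path up p q r) = pathstart (triangle_path up p q r)"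
    "path_image (triangle_path up p q r) \<subseteq> {w. Im w = 0 \<or> qf p q w = 0 \<or> qf q r w = 0 \<or> qf r p w = 0}"
  using edge_path_props[OF assms(1), of up] edge_path_props[OF assms(2), of up] edge_path_props[OF assms(3), of up]
  by (auto simp: triangle_path_def path_image_join)

lemma wn_tri:
  assumes d: "p \<noteq> q" "q \<noteq> r" "r \<noteq> p" and g: "good p q r z"
  shows "z \<notin> path_image (triangle_path up p q r)"
    "winding_number (triangle_path up p q r) z = of_int (sg up p q z + sg up q r z + sg up r p z)"
proof -
  show "z \<notin> path_image (triangle_path up p q r)" using tri_props(3)[OF d, of up] g by (auto simp: good_def)
  have g': "Im z \<noteq> 0" "qf p q z \<noteq> 0" "qf q r z \<noteq> 0" "qf r p z \<noteq> 0" using g by (auto simp: good_def)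
  note e1 = edge_path_props[OF d(1), of up] and e2 = edge_path_props[OF d(2), of up] and e3 = edge_path_props[OF d(3), of up]
  have z1: "z \<notin> path_image (edge_path up p q)" using e1(4) g' by auto
  have z2: "z \<notin> path_image (edge_path up q r)" using e2(4) g' by auto
  have z3: "z \<notin> path_image (edge_path up r p)" using e3(4) g' by auto
  have "winding_number (triangle_path up p q r) z =
        winding_number (edge_path up p q) z + (winding_number (edge_path up q r) z + winding_number (edge_path up r p) z)"
    unfolding triangle_path_def
    using e1 e2 e3 z1 z2 z3 by (simp add: winding_number_join path_image_join)
  also have "\<dots> = (winding_number (linepath (of_nat p) (of_nat q)) z + winding_number (linepath (of_nat q) (of_nat r)) z
        + winding_number (linepath (of_nat r) (of_nat p)) z) + of_int (sg up p q z + sg up q r z + sg up r p z)"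
    using wn_edge_path[OF d(1) g'(1,2)] wn_edge_path[OF d(2) g'(1,3)] wn_edge_path[OF d(3) g'(1,4)]
    by (simp add: algebra_simps)
  also have "winding_number (linepath (of_nat p) (of_nat q)) z + winding_number (linepath (of_nat q) (of_nat r)) z
        + winding_number (linepath (of_nat r) (of_nat p)) z = 0"
  proof -
    define lp where "lp = linepath (of_nat p :: complex) (of_nat q) +++ linepath (of_nat q) (of_nat r) +++ linepath (of_nat r) (of_nat p)"
    have segs: "z \<notin> closed_segment (of_nat a :: complex) (of_nat b)" for a b using seg_Im0 g' by blast
    have "winding_number lp z = winding_number (linepath (of_nat p) (of_nat q)) z + (winding_number (linepath (of_nat q) (of_nat r)) z
        + winding_number (linepath (of_nat r) (of_nat p)) z)"
      unfolding lp_def using segs by (simp add: winding_number_join path_image_join)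
    moreover have "winding_number lp z = 0"
    proof (rule winding_number_zero_outside)
      show "convex ({w. Im w \<ge> 0} \<inter> {w. Im w \<le> (0::real)})" by (intro convex_Int convex_halfspace_Im_ge convex_halfspace_Im_le)
      show "path lp" "pathfinish lp = pathstart lp" by (simp_all add: lp_def)
      show "z \<notin> {w. Im w \<ge> 0} \<inter> {w. Im w \<le> 0}" using g' by auto
      show "path_image lp \<subseteq> {w. Im w \<ge> 0} \<inter> {w. Im w \<le> 0}"
        unfolding lp_def using seg_Im0 by (fastforce simp: path_image_join)
    qed
    ultimately show ?thesis by (simp add: algebra_simps)
  qed
  finally show "winding_number (triangle_path up p q r) z = of_int (sg up p q z + sg up q r z + sg up r p z)" by simp
qed



lemma fin_qf: "finite {t::real. qf a b (z + of_real t * \<i>) = 0}"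
proof -
  define C where "C = - ((Re z - real a) * (Re z - real b))"
  have "{t::real. qf a b (z + of_real t * \<i>) = 0} \<subseteq> {- Im z + sqrt C, - Im z - sqrt C}"
  proof
    fix t assume "t \<in> {t::real. qf a b (z + of_real t * \<i>) = 0}"
    then have "(Im z + t)^2 = C" by (simp add: qf_def C_def algebra_simps)
    then have "sqrt C = \<bar>Im z + t\<bar>" using real_sqrt_abs by metis
    then show "t \<in> {- Im z + sqrt C, - Im z - sqrt C}" by (auto simp: abs_if split: if_splits)
  qed
  then show ?thesis by (rule finite_subset) simp
qed

lemma fin_Im: "finite {t::real. Im (z + of_real t * \<i>) = 0}"
proof -
  have "{t::real. Im (z + of_real t * \<i>) = 0} \<subseteq> {- Im z}" by auto
  then show ?thesis by (rule finite_subset) simp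
qed

lemma perturb:
  assumes g: "path \<gamma>" "pathfinish \<gamma> = pathstart \<gamma>" and z: "z \<notin> path_image \<gamma>" "winding_number \<gamma> z = k"
  shows "\<exists>z'. good p q r z' \<and> z' \<notin> path_image \<gamma> \<and> winding_number \<gamma> z' = k"
proof -
  define S where "S = {w. w \<notin> path_image \<gamma> \<and> winding_number \<gamma> w = k}"
  have "open S" unfolding S_def by (rule open_winding_number_levelsets[OF g])
  moreover have "z \<in> S" using z by (simp add: S_def)
  ultimately obtain e where e: "e > 0" "ball z e \<subseteq> S" using open_contains_ball by blast
  define B where "B = {t::real. Im (z + of_real t * \<i>) = 0} \<union> {t. qf p q (z + of_real t * \<i>) = 0}
     \<union> {t. qf q r (z + of_real t * \<i>) = 0} \<union> {t. qf r p (z + of_real t * \<i>) = 0}"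
  have "finite B" unfolding B_def using fin_qf fin_Im by blast
  moreover have "infinite {0<..<e}" using e by simp
  ultimately obtain t where t: "t \<in> {0<..<e}" "t \<notin> B"
    using Diff_infinite_finite by (metis Diff_iff ex_in_conv finite.emptyI)
  have "z + of_real t * \<i> \<in> ball z e" using t by (simp add: dist_norm norm_mult)
  then have "z + of_real t * \<i> \<in> S" using e by blast
  moreover have "good p q r (z + of_real t * \<i>)" using t by (simp add: good_def B_def)
  ultimately show ?thesis by (auto simp: S_def)
qed



lemma qf_neg_between: "(a::nat) \<le> b \<Longrightarrow> qf a b z < 0 \<Longrightarrow> real a < Re z \<and> Re z < real b"
proof -
  assume ab: "a \<le> b" and q: "qf a b z < 0"
  have "(Re z - real a) * (Re z - real b) < 0" using q unfolding qf_def
    by (smt (verit) zero_le_power2)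
  then show ?thesis using ab by (auto simp: mult_less_0_iff)
qed

lemma nestL: "a < b \<Longrightarrow> b < c \<Longrightarrow> qf a b z < 0 \<Longrightarrow> qf a c z < 0"
proof -
  assume h: "a < b" "b < c" "qf a b z < 0"
  then have x: "real a < Re z" "Re z < real b" using qf_neg_between[of a b z] by auto
  have "(Re z - real a) * (Re z - real c) < (Re z - real a) * (Re z - real b)"
    using x h by (intro mult_strict_left_mono) auto
  then show ?thesis using h(3) unfolding qf_def by linarith
qed

lemma nestR: "a < b \<Longrightarrow> b < c \<Longrightarrow> qf b c z < 0 \<Longrightarrow> qf a c z < 0"
proof -
  assume h: "a < b" "b < c" "qf b c z < 0"
  then have x: "real b < Re z" "Re z < real c" using qf_neg_between[of b c z] by auto
  have "(Re z - real a) * (Re z - real c) < (Re z - real b) * (Re z - real c)"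
    using x h by (intro mult_strict_right_mono_neg) auto
  then show ?thesis using h(3) unfolding qf_def by linarith
qed

lemma disjq: "a < b \<Longrightarrow> b < c \<Longrightarrow> qf a b z < 0 \<Longrightarrow> qf b c z < 0 \<Longrightarrow> False"
  using qf_neg_between[of a b z] qf_neg_between[of b c z] by auto

lemma wit:
  assumes "a < m" "m < b" "y^2 < 1"
  shows "qf a b (Complex (real m) y) < 0" "qf a m (Complex (real m) y) = y^2" "qf m b (Complex (real m) y) = y^2"
    "qf m a (Complex (real m) y) = y^2" "qf b m (Complex (real m) y) = y^2" "qf b a (Complex (real m) y) < 0"
proof -
  have "(real m - real a) * (real b - real m) \<ge> 1 * 1"
    using assms by (intro mult_mono) auto
  then show "qf a b (Complex (real m) y) < 0" "qf b a (Complex (real m) y) < 0"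
    using assms(3) by (auto simp: qf_def algebra_simps)
qed (simp_all add: qf_def)



lemma comb_blue_fwd:
  assumes ij: "i < j" "r \<noteq> i" "r \<noteq> j" and bl: "blue up i j" and g: "good i j r z"
    and S: "sg up i j z + sg up j r z + sg up r i z = 1"
  shows "(j < r \<and> blue up i r) \<or> (r < i \<and> blue up r j)"
proof -
  have qs: "qf j i z = qf i j z" "qf r j z = qf j r z" "qf i r z = qf r i z" using qf_sym by auto
  consider "j < r" | "r < i" | "i < r \<and> r < j" using ij by linarith
  then show ?thesis
  proof cases
    case 1
    have n: "qf j r z < 0 \<Longrightarrow> qf i r z < 0" using nestR[OF ij(1) 1] .
    show ?thesis using 1 S ij bl n qs by (auto simp: sg_def sig_def blue_def split: if_splits)
  next
    case 2
    have n: "qf r i z < 0 \<Longrightarrow> qf r j z < 0" using nestL[OF 2 ij(1)] .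
    show ?thesis using 2 S ij bl n qs by (auto simp: sg_def sig_def blue_def split: if_splits)
  next
    case 3
    have n1: "qf r j z < 0 \<Longrightarrow> qf i j z < 0" using nestR[of i r j] 3 by auto
    have n2: "qf i r z < 0 \<Longrightarrow> qf i j z < 0" using nestL[of i r j] 3 by auto
    have d: "qf i r z < 0 \<Longrightarrow> qf r j z < 0 \<Longrightarrow> False" using disjq[of i r j] 3 by auto
    show ?thesis using 3 S ij bl n1 n2 d qs by (auto simp: sg_def sig_def blue_def split: if_splits)
  qed
qed

lemma comb_red_fwd:
  assumes ij: "i < j" "r \<noteq> i" "r \<noteq> j" and bl: "\<not> blue up i j" and g: "good i j r z"
    and S: "sg up i j z + sg up j r z + sg up r i z = -1"
  shows "(j < r \<and> \<not> blue up i r) \<or> (r < i \<and> \<not> blue up r j)"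
proof -
  have qs: "qf j i z = qf i j z" "qf r j z = qf j r z" "qf i r z = qf r i z" using qf_sym by auto
  consider "j < r" | "r < i" | "i < r \<and> r < j" using ij by linarith
  then show ?thesis
  proof cases
    case 1
    have n: "qf j r z < 0 \<Longrightarrow> qf i r z < 0" using nestR[OF ij(1) 1] .
    show ?thesis using 1 S ij bl n qs by (auto simp: sg_def sig_def blue_def split: if_splits)
  next
    case 2
    have n: "qf r i z < 0 \<Longrightarrow> qf r j z < 0" using nestL[OF 2 ij(1)] .
    show ?thesis using 2 S ij bl n qs by (auto simp: sg_def sig_def blue_def split: if_splits)
  next
    case 3
    have n1: "qf r j z < 0 \<Longrightarrow> qf i j z < 0" using nestR[of i r j] 3 by auto
    have n2: "qf i r z < 0 \<Longrightarrow> qf i j z < 0" using nestL[of i r j] 3 by auto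
    have d: "qf i r z < 0 \<Longrightarrow> qf r j z < 0 \<Longrightarrow> False" using disjq[of i r j] 3 by auto
    show ?thesis using 3 S ij bl n1 n2 d qs by (auto simp: sg_def sig_def blue_def split: if_splits)
  qed
qed



lemma comb_bwd:
  assumes ij: "i < j" "r \<noteq> i" "r \<noteq> j"
  shows "(j < r \<and> blue up i r) \<or> (r < i \<and> blue up r j) \<Longrightarrow> \<exists>z. good i j r z \<and> sg up i j z + sg up j r z + sg up r i z = 1"
    and "(j < r \<and> \<not> blue up i r) \<or> (r < i \<and> \<not> blue up r j) \<Longrightarrow> \<exists>z. good i j r z \<and> sg up i j z + sg up j r z + sg up r i z = -1"
proof -
  have y1: "(1/2::real)^2 < 1" "(-1/2::real)^2 < 1" by (simp_all add: power2_eq_square)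
  have qs: "qf j i z = qf i j z" "qf r j z = qf j r z" "qf i r z = qf r i z" for z using qf_sym by auto
  {
    fix y :: real assume y: "y^2 < 1" "y \<noteq> 0"
    have A: "j < r \<Longrightarrow> good i j r (Complex (real j) y) \<and> qf i j (Complex (real j) y) = y^2 \<and> qf j r (Complex (real j) y) = y^2
       \<and> qf i r (Complex (real j) y) < 0"
      using wit[OF ij(1) _ y(1), of r] y qs by (auto simp: good_def)
    have B: "r < i \<Longrightarrow> good i j r (Complex (real i) y) \<and> qf i j (Complex (real i) y) = y^2 \<and> qf r i (Complex (real i) y) = y^2
       \<and> qf r j (Complex (real i) y) < 0"
      using wit[OF _ ij(1) y(1), of r] y qs by (auto simp: good_def)
    note A B
  } note AB = this
  show "(j < r \<and> blue up i r) \<or> (r < i \<and> blue up r j) \<Longrightarrow> \<exists>z. good i j r z \<and> sg up i j z + sg up j r z + sg up r i z = 1"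
  proof (elim disjE conjE)
    assume h: "j < r" "blue up i r"
    note a = AB(1)[of "1/2", OF y1(1) _ h(1)]
    show ?thesis
      by (rule exI[of _ "Complex (real j) (1/2)"]) (use a h ij qs in \<open>auto simp: sg_def sig_def blue_def\<close>)
  next
    assume h: "r < i" "blue up r j"
    note a = AB(2)[of "1/2", OF y1(1) _ h(1)]
    show ?thesis
      by (rule exI[of _ "Complex (real i) (1/2)"]) (use a h ij qs in \<open>auto simp: sg_def sig_def blue_def\<close>)
  qed
  show "(j < r \<and> \<not> blue up i r) \<or> (r < i \<and> \<not> blue up r j) \<Longrightarrow> \<exists>z. good i j r z \<and> sg up i j z + sg up j r z + sg up r i z = -1"
  proof (elim disjE conjE)
    assume h: "j < r" "\<not> blue up i r"
    note a = AB(1)[of "-1/2", OF y1(2) _ h(1)]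
    show ?thesis
      by (rule exI[of _ "Complex (real j) (-1/2)"]) (use a h ij qs in \<open>auto simp: sg_def sig_def blue_def\<close>)
  next
    assume h: "r < i" "\<not> blue up r j"
    note a = AB(2)[of "-1/2", OF y1(2) _ h(1)]
    show ?thesis
      by (rule exI[of _ "Complex (real i) (-1/2)"]) (use a h ij qs in \<open>auto simp: sg_def sig_def blue_def\<close>)
  qed
qed



lemma side_iff:
  assumes d: "p \<noteq> q" "q \<noteq> r" "r \<noteq> p"
  shows "left_of up p q r \<longleftrightarrow> (\<exists>z. good p q r z \<and> sg up p q z + sg up q r z + sg up r p z = 1)"
    and "right_of up p q r \<longleftrightarrow> (\<exists>z. good p q r z \<and> sg up p q z + sg up q r z + sg up r p z = -1)"
proof -
  note tp = tri_props[OF d, of up]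
  have gen: "(\<exists>z. z \<notin> path_image (triangle_path up p q r) \<and> winding_number (triangle_path up p q r) z = of_int k)
     \<longleftrightarrow> (\<exists>z. good p q r z \<and> sg up p q z + sg up q r z + sg up r p z = k)" for k :: int
  proof
    assume "\<exists>z. z \<notin> path_image (triangle_path up p q r) \<and> winding_number (triangle_path up p q r) z = of_int k"
    then obtain z where "z \<notin> path_image (triangle_path up p q r)" "winding_number (triangle_path up p q r) z = of_int k" by blast
    then obtain z' where z': "good p q r z'" "winding_number (triangle_path up p q r) z' = of_int k"
      using perturb[OF tp(1,2)] by blast
    then have "of_int (sg up p q z' + sg up q r z' + sg up r p z') = (of_int k :: complex)"
      using wn_tri(2)[OF d z'(1)] by simp
    then have "sg up p q z' + sg up q r z' + sg up r p z' = k" using of_int_eq_iff by blast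
    then show "\<exists>z. good p q r z \<and> sg up p q z + sg up q r z + sg up r p z = k" using z' by blast
  next
    assume "\<exists>z. good p q r z \<and> sg up p q z + sg up q r z + sg up r p z = k"
    then obtain z where z: "good p q r z" "sg up p q z + sg up q r z + sg up r p z = k" by blast
    show "\<exists>z. z \<notin> path_image (triangle_path up p q r) \<and> winding_number (triangle_path up p q r) z = of_int k"
      using wn_tri[OF d z(1), of up] z(2) by blast
  qed
  show "left_of up p q r \<longleftrightarrow> (\<exists>z. good p q r z \<and> sg up p q z + sg up q r z + sg up r p z = 1)"
    using gen[of 1] by (simp add: left_of_def counterclockwise_def)
  show "right_of up p q r \<longleftrightarrow> (\<exists>z. good p q r z \<and> sg up p q z + sg up q r z + sg up r p z = -1)"
    using gen[of "-1"] by (simp add: right_of_def clockwise_def)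
qed



theorem lemma3:
  fixes n i j :: nat and up :: "nat \<Rightarrow> nat \<Rightarrow> bool"
  assumes "normalized_book_drawing n up"
    and "1 \<le> i" and "i < j" and "j \<le> n"
  shows "is_k_edge n up i j
           (card {j'. j < j' \<and> j' \<le> n \<and> (blue up i j' \<longleftrightarrow> blue up i j)}
          + card {i'. 1 \<le> i' \<and> i' < i \<and> (blue up i' j \<longleftrightarrow> blue up i j)})"
proof -
  define K1 where "K1 = {j'. j < j' \<and> j' \<le> n \<and> (blue up i j' \<longleftrightarrow> blue up i j)}"
  define K2 where "K2 = {i'. 1 \<le> i' \<and> i' < i \<and> (blue up i' j \<longleftrightarrow> blue up i j)}"
  have f1: "finite K1" unfolding K1_def by (rule finite_subset[of _ "{..n}"]) auto
  have f2: "finite K2" unfolding K2_def by (rule finite_subset[of _ "{..i}"]) auto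
  have dj: "K1 \<inter> K2 = {}" using assms by (auto simp: K1_def K2_def)
  have cardK: "card (K1 \<union> K2) = card K1 + card K2" using card_Un_disjoint[OF f1 f2 dj] .
  have ij: "i < j" using assms by simp
  show ?thesis
  proof (cases "blue up i j")
    case True
    have "{r \<in> {1..n} - {i, j}. left_of up i j r} = K1 \<union> K2"
    proof (intro set_eqI iffI)
      fix r assume r: "r \<in> {r \<in> {1..n} - {i, j}. left_of up i j r}"
      then have d: "i \<noteq> j" "j \<noteq> r" "r \<noteq> i" "r \<noteq> j" using ij by auto
      obtain z where "good i j r z" "sg up i j z + sg up j r z + sg up r i z = 1"
        using r side_iff(1)[OF d(1-3)] by blast
      then have "(j < r \<and> blue up i r) \<or> (r < i \<and> blue up r j)"
        using comb_blue_fwd[OF ij d(3,4) True] by blast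
      then show "r \<in> K1 \<union> K2" using r True by (auto simp: K1_def K2_def)
    next
      fix r assume r: "r \<in> K1 \<union> K2"
      then have d: "i \<noteq> j" "j \<noteq> r" "r \<noteq> i" "r \<noteq> j" "r \<in> {1..n}" using ij assms by (auto simp: K1_def K2_def)
      have "(j < r \<and> blue up i r) \<or> (r < i \<and> blue up r j)" using r True by (auto simp: K1_def K2_def)
      then have "left_of up i j r" using comb_bwd(1)[OF ij d(3,4)] side_iff(1)[OF d(1-3)] by blast
      then show "r \<in> {r \<in> {1..n} - {i, j}. left_of up i j r}" using d by auto
    qed
    then show ?thesis using cardK by (simp add: is_k_edge_def K1_def K2_def)
  next
    case False
    have "{r \<in> {1..n} - {i, j}. right_of up i j r} = K1 \<union> K2"
    proof (intro set_eqI iffI)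
      fix r assume r: "r \<in> {r \<in> {1..n} - {i, j}. right_of up i j r}"
      then have d: "i \<noteq> j" "j \<noteq> r" "r \<noteq> i" "r \<noteq> j" using ij by auto
      obtain z where "good i j r z" "sg up i j z + sg up j r z + sg up r i z = -1"
        using r side_iff(2)[OF d(1-3)] by blast
      then have "(j < r \<and> \<not> blue up i r) \<or> (r < i \<and> \<not> blue up r j)"
        using comb_red_fwd[OF ij d(3,4) False] by blast
      then show "r \<in> K1 \<union> K2" using r False by (auto simp: K1_def K2_def)
    next
      fix r assume r: "r \<in> K1 \<union> K2"
      then have d: "i \<noteq> j" "j \<noteq> r" "r \<noteq> i" "r \<noteq> j" "r \<in> {1..n}" using ij assms by (auto simp: K1_def K2_def)
      have "(j < r \<and> \<not> blue up i r) \<or> (r < i \<and> \<not> blue up r j)" using r False by (auto simp: K1_def K2_def)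
      then have "right_of up i j r" using comb_bwd(2)[OF ij d(3,4)] side_iff(2)[OF d(1-3)] by blast
      then show "r \<in> {r \<in> {1..n} - {i, j}. right_of up i j r}" using d by auto
    qed
    then show ?thesis using cardK by (simp add: is_k_edge_def K1_def K2_def)
  qed
qed


end
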